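(* Assume the standing conventions of the context. Let $\Psi'=\binom{c_k}{d_l}$ be a consecutive pair in $Z'_{\mathrm I}$ (so $l\in\{k-1,k\}$), and suppose $\mathcal D_{Z,Z'}\neq\emptyset$. Then $(Z,\Lambda_{\Psi'})\in\mathcal D_{Z,Z'}$ if and only if \[ \begin{cases} a_k>c_k\text{ and }d_k\geq b_k, & \text{if $m'=m$ and $l=k$};\\ c_k\geq a_k\text{ and }b_{k-1}>d_{k-1}, & \text{if $m'=m$ and $l=k-1$};\\ a_k\geq c_k\text{ and }d_k>b_k, & \text{if $m'=m+1$ and $l=k$};\\ c_k>a_k\text{ and }b_{k-1}\geq d_{k-1}, & \text{if $m'=m+1$ and $l=k-1$}. \end{cases} \]
   Context: A symbol is an array $\Lambda=\binom{a'_1,\ldots,a'_{m_1}}{b'_1,\ldots,b'_{m_2}}$ of two strictly decreasing finite sequences of nonnegative integers (top row, bottom row); its defect is $\mathrm{def}(\Lambda)=m_1-m_2$. Standing assumptions: $Z=\binom{a_1,\ldots,a_{m+1}}{b_1,\ldots,b_m}$ is a special symbol of defect $1$, i.e. $a_1\ge b_1\ge a_2\ge b_2\ge\cdots\ge b_m\ge a_{m+1}$; $Z'=\binom{c_1,\ldots,c_{m'}}{d_1,\ldots,d_{m'}}$ is a special symbol of defect $0$, i.e. $c_1\ge d_1\ge c_2\ge d_2\ge\cdots\ge c_{m'}\ge d_{m'}$; and $m'\in\{m,m+1\}$. For a symbol $Y$, $Y_{\mathrm I}$ is the set of entries of $Y$ occurring in exactly one row. For $M\subset Z_{\mathrm I}$,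 $\Lambda_M$ is the symbol obtained from $Z$ by moving every entry of $M$ to the other row (rows re-sorted decreasingly); for $N\subset Z'_{\mathrm I}$, $\Lambda_N$ is obtained from $Z'$ in the same way. $\overline{\mathcal S}_Z=\{\Lambda_M: M\subset Z_{\mathrm I}\}$, $\overline{\mathcal S}_{Z'}=\{\Lambda_N:N\subset Z'_{\mathrm I}\}$; $\mathcal S_{Z,1}$ (resp. $\mathcal S_{Z',0}$) is the set of elements of $\overline{\mathcal S}_Z$ of defect $1$ (resp. of $\overline{\mathcal S}_{Z'}$ of defect $0$). A consecutive pair in $Z'_{\mathrm I}$ is a two-element subset $\{c_k,d_l\}\subset Z'_{\mathrm I}$, written $\binom{c_k}{d_l}$, with $l\in\{k-1,k\}$; a consecutive pair in $Z_{\mathrm I}$ is $\{a_k,b_l\}\subset Z_{\mathrm I}$, written $\binom{a_k}{b_l}$, with $l\in\{k-1,k\}$. Relation $\overline{\mathcal B}^+_{Z,Z'}\subset\overline{\mathcal S}_Z\times\overline{\mathcal S}_{Z'}$: for $\Lambda=\binom{a'_1,\ldots,a'_{m_1}}{b'_1,\ldots,b'_{m_2}}\in\overline{\mathcal S}_Z$ and $\Lambda'=\binom{c'_1,\ldots,c'_{m'_1}}{d'_1,\ldots,d'_{m'_2}}\in\overline{\mathcal S}_{Z'}$, $(\Lambda,\Lambda')\in\overline{\mathcal B}^+_{Z,Z'}$ iff $\mathrm{def}(\Lambda')=1-\mathrm{def}(\Lambda)$ and: if $m'=m$, $a'_i>d'_i\ge a'_{i+1}$ for $1\le i\le m'_2$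 and $b'_{i-1}>c'_i\ge b'_i$ for $1\le i\le m'_1$; if $m'=m+1$, $a'_i\ge d'_i>a'_{i+1}$ for $1\le i\le m'_2$ and $b'_{i-1}\ge c'_i>b'_i$ for $1\le i\le m'_1$; here $b'_0=+\infty$ and nonexistent entries $a'_j,b'_j$ beyond the row lengths are $-\infty$. Then $\mathcal D_{Z,Z'}=\overline{\mathcal B}^+_{Z,Z'}\cap(\mathcal S_{Z,1}\times\mathcal S_{Z',0})$. *)

theory Defs
  imports Main "HOL-Library.Extended_Real"
begin

(* A symbol: (top row, bottom row), each a strictly decreasing list of naturals. *)
type_synonym symbol = "nat list \<times> nat list"

definition is_symbol :: "symbol \<Rightarrow> bool" where
  "is_symbol \<Lambda> \<longleftrightarrow> sorted_wrt (>) (fst \<Lambda>) \<and> sorted_wrt (>) (snd \<Lambda>)"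

definition defect :: "symbol \<Rightarrow> int" where
  "defect \<Lambda> = int (length (fst \<Lambda>)) - int (length (snd \<Lambda>))"

definition entries_I :: "symbol \<Rightarrow> nat set" where
  "entries_I \<Lambda> = (set (fst \<Lambda>) - set (snd \<Lambda>)) \<union> (set (snd \<Lambda>) - set (fst \<Lambda>))"

definition dec_list :: "nat set \<Rightarrow> nat list" where
  "dec_list S = rev (sorted_list_of_set S)"

(* Lambda_M: move every entry of M to the other row *)
definition move :: "symbol \<Rightarrow> nat set \<Rightarrow> symbol" where
  "move \<Lambda> M =
     (dec_list ((set (fst \<Lambda>) - M) \<union> (set (snd \<Lambda>) \<inter> M)),
      dec_list ((set (snd \<Lambda>) - M) \<union> (set (fst \<Lambda>) \<inter> M)))"

(* 1-based entry of a row, nonexistent entries are -infinity *)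
definition ent :: "nat list \<Rightarrow> nat \<Rightarrow> ereal" where
  "ent xs i = (if 1 \<le> i \<and> i \<le> length xs then ereal (real (xs ! (i - 1))) else -\<infinity>)"

(* same, with index 0 giving +infinity (convention b'_0 = +infinity) *)
definition entB :: "nat list \<Rightarrow> nat \<Rightarrow> ereal" where
  "entB xs i = (if i = 0 then \<infinity> else ent xs i)"

definition special_def1 :: "symbol \<Rightarrow> bool" where
  "special_def1 Z \<longleftrightarrow> is_symbol Z \<and> length (fst Z) = length (snd Z) + 1 \<and>
     (\<forall>i. 1 \<le> i \<and> i \<le> length (snd Z) \<longrightarrow>
        ent (fst Z) i \<ge> ent (snd Z) i \<and> ent (snd Z) i \<ge> ent (fst Z) (i + 1))"

definition special_def0 :: "symbol \<Rightarrow> bool" where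
  "special_def0 Z' \<longleftrightarrow> is_symbol Z' \<and> length (fst Z') = length (snd Z') \<and>
     (\<forall>i. 1 \<le> i \<and> i \<le> length (snd Z') \<longrightarrow>
        ent (fst Z') i \<ge> ent (snd Z') i \<and>
        (i < length (snd Z') \<longrightarrow> ent (snd Z') i \<ge> ent (fst Z') (i + 1)))"

definition Sbar :: "symbol \<Rightarrow> symbol set" where
  "Sbar Z = {move Z M | M. M \<subseteq> entries_I Z}"

definition S_def :: "symbol \<Rightarrow> int \<Rightarrow> symbol set" where
  "S_def Z \<delta> = {\<Lambda> \<in> Sbar Z. defect \<Lambda> = \<delta>}"

definition Bplus :: "symbol \<Rightarrow> symbol \<Rightarrow> (symbol \<times> symbol) set" where
  "Bplus Z Z' = {(\<Lambda>, \<Lambda>'). \<Lambda> \<in> Sbar Z \<and> \<Lambda>' \<in> Sbar Z' \<and>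
     defect \<Lambda>' = 1 - defect \<Lambda> \<and>
     (let a = fst \<Lambda>; b = snd \<Lambda>; c = fst \<Lambda>'; d = snd \<Lambda>'; m = length (snd Z); m' = length (fst Z') in
      (m' = m \<longrightarrow>
         (\<forall>i. 1 \<le> i \<and> i \<le> length d \<longrightarrow> ent a i > ent d i \<and> ent d i \<ge> ent a (i + 1)) \<and>
         (\<forall>i. 1 \<le> i \<and> i \<le> length c \<longrightarrow> entB b (i - 1) > ent c i \<and> ent c i \<ge> ent b i)) \<and>
      (m' = m + 1 \<longrightarrow>
         (\<forall>i. 1 \<le> i \<and> i \<le> length d \<longrightarrow> ent a i \<ge> ent d i \<and> ent d i > ent a (i + 1)) \<and>
         (\<forall>i. 1 \<le> i \<and> i \<le> length c \<longrightarrow> entB b (i - 1) \<ge> ent c i \<and> ent c i > ent b i)))}"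

definition Dset :: "symbol \<Rightarrow> symbol \<Rightarrow> (symbol \<times> symbol) set" where
  "Dset Z Z' = Bplus Z Z' \<inter> (S_def Z 1 \<times> S_def Z' 0)"

end

theory Submission
  imports Defs
begin

lemma dec_list_props:
  assumes "finite S"
  shows "sorted_wrt (>) (dec_list S)" "set (dec_list S) = S" "length (dec_list S) = card S"
  using assms by (auto simp: dec_list_def sorted_wrt_rev strict_sorted_list_of_set)
lemma sdist: "sorted_wrt (>) (xs::nat list) \<Longrightarrow> distinct xs"
proof -
  assume "sorted_wrt (>) xs"
  then have "sorted_wrt (<) (rev xs)" unfolding sorted_wrt_rev .
  then have "distinct (rev xs)" by (rule strict_sorted_iff[THEN iffD1, THEN conjunct2])
  then show "distinct xs" by simp
qed
lemma dec_list_set: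
  assumes "sorted_wrt (>) xs" shows "dec_list (set xs) = xs"
proof -
  have "sorted_wrt (<) (rev xs)" using assms unfolding sorted_wrt_rev .
  then have "sorted (rev xs)" "distinct (rev xs)" using strict_sorted_iff[of "rev xs"] by auto
  then have "sorted_list_of_set (set (rev xs)) = rev xs"
    using sorted_list_of_set.idem_if_sorted_distinct by blast
  then show ?thesis by (simp add: dec_list_def)
qed

definition N :: "nat list \<Rightarrow> nat \<Rightarrow> nat" where
  "N xs x = card {y \<in> set xs. x \<le> y}"


lemma N_char:
  assumes s: "sorted_wrt (>) u"
  shows "(j \<le> N u x) \<longleftrightarrow> (j = 0 \<or> (j \<le> length u \<and> x \<le> u ! (j - 1)))"
proof
  assume h: "j \<le> N u x"
  show "j = 0 \<or> (j \<le> length u \<and> x \<le> u ! (j - 1))"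
  proof (rule ccontr)
    assume c: "\<not> ?thesis"
    have dist: "distinct u" using sdist s by blast
    show False
    proof (cases "j \<le> length u")
      case True
      with c have lt: "u ! (j - 1) < x" "j \<ge> 1" by auto
      have "{y \<in> set u. x \<le> y} \<subseteq> set (take (j - 1) u)"
      proof
        fix y assume "y \<in> {y \<in> set u. x \<le> y}"
        then obtain i where i: "i < length u" "u ! i = y" "x \<le> y" by (auto simp: in_set_conv_nth)
        have "i < j - 1"
        proof (rule ccontr)
          assume "\<not> i < j - 1"
          then have "j - 1 \<le> i" by simp
          then have "u ! i \<le> u ! (j - 1)"
          proof (cases "j - 1 = i")
            case False
            then have "j - 1 < i" using \<open>j - 1 \<le> i\<close> by simp
            then show ?thesis using s i unfolding sorted_wrt_iff_nth_less by (metis less_imp_le)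
          qed simp
          with i lt show False by simp
        qed
        with i show "y \<in> set (take (j - 1) u)" by (auto simp: in_set_conv_nth)
      qed
      then have "N u x \<le> card (set (take (j - 1) u))" unfolding N_def by (rule card_mono[rotated]) simp
      also have "\<dots> = j - 1" using dist True by (simp add: distinct_card)
      finally show False using h lt by simp
    next
      case False
      have "N u x \<le> card (set u)" unfolding N_def by (rule card_mono) auto
      also have "\<dots> = length u" using dist by (simp add: distinct_card)
      finally show False using h False by simp
    qed
  qed
next
  assume h: "j = 0 \<or> (j \<le> length u \<and> x \<le> u ! (j - 1))"
  show "j \<le> N u x"
  proof (cases "j = 0")
    case False
    with h have j: "j \<le> length u" "x \<le> u ! (j - 1)" by auto
    have dist: "distinct u" using sdist s by blast
    have "set (take j u) \<subseteq> {y \<in> set u. x \<le> y}"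
    proof
      fix y assume "y \<in> set (take j u)"
      then obtain i where i: "i < j" "u ! i = y" using j by (auto simp: in_set_conv_nth)
      have "u ! (j - 1) \<le> u ! i"
      proof (cases "i = j - 1")
        case False
        then have "i < j - 1" using i by simp
        moreover have "j - 1 < length u" using j i by linarith
        ultimately show ?thesis using sorted_wrt_nth_less[OF s] by (simp add: less_imp_le)
      qed simp
      moreover have "i < length u" using i j by simp
      ultimately show "y \<in> {y \<in> set u. x \<le> y}" using i j by (auto intro: nth_mem)
    qed
    then have "card (set (take j u)) \<le> N u x" unfolding N_def by (rule card_mono[rotated]) simp
    moreover have "card (set (take j u)) = j" using dist j by (simp add: distinct_card)
    ultimately show ?thesis by simp
  qed simp
qed

lemma G:
  assumes su: "sorted_wrt (>) u" and sv: "sorted_wrt (>) v"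
    and lu: "length u = L + e" and lv: "L \<le> length v"
  shows "(\<forall>i<L. u ! (i + e) + s \<le> v ! i) \<longleftrightarrow> (\<forall>x. N u x \<le> N v (x + s) + e)"
proof
  assume h: "\<forall>i<L. u ! (i + e) + s \<le> v ! i"
  show "\<forall>x. N u x \<le> N v (x + s) + e"
  proof
    fix x
    define j where "j = N u x"
    show "N u x \<le> N v (x + s) + e"
    proof (cases "j \<le> e")
      case False
      have "j \<le> N u x" by (simp add: j_def)
      then have "j \<le> length u \<and> x \<le> u ! (j - 1)" using N_char[OF su] False by auto
      moreover have "j - 1 - e < L" using calculation lu False by auto
      moreover have "j - 1 - e + e = j - 1" using False by simp
      moreover have "u ! (j - 1 - e + e) + s \<le> v ! (j - 1 - e)" using h \<open>j - 1 - e < L\<close> by blast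
      ultimately have "x + s \<le> v ! (j - 1 - e)" by simp
      then have "Suc (j - 1 - e) \<le> N v (x + s)"
        using N_char[OF sv, of "Suc (j - 1 - e)"] \<open>j - 1 - e < L\<close> lv by auto
      then show ?thesis using False j_def by simp
    qed (simp add: j_def)
  qed
next
  assume h: "\<forall>x. N u x \<le> N v (x + s) + e"
  show "\<forall>i<L. u ! (i + e) + s \<le> v ! i"
  proof (intro allI impI)
    fix i assume i: "i < L"
    have "Suc (i + e) \<le> N u (u ! (i + e))" using N_char[OF su] i lu by auto
    then have "Suc i \<le> N v (u ! (i + e) + s)" using h[rule_format, of "u ! (i + e)"] by simp
    then show "u ! (i + e) + s \<le> v ! i" using N_char[OF sv] by auto
  qed
qed

lemma ent_in: "i < length xs \<Longrightarrow> ent xs (Suc i) = ereal (real (xs ! i))"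
  by (simp add: ent_def)
lemma ent_out: "length xs < i \<Longrightarrow> ent xs i = -\<infinity>"
  by (simp add: ent_def)
lemma ent0[simp]: "ent xs 0 = -\<infinity>" by (simp add: ent_def)
lemma entB_Suc[simp]: "entB xs (Suc i) = ent xs (Suc i)" by (simp add: entB_def)
lemma entB0[simp]: "entB xs 0 = \<infinity>" by (simp add: entB_def)

lemma shift_all: "(\<forall>i. 1 \<le> i \<and> i \<le> n \<longrightarrow> P i) \<longleftrightarrow> (\<forall>i<n. P (Suc i))"
proof
  assume h: "\<forall>i. 1 \<le> i \<and> i \<le> n \<longrightarrow> P i"
  show "\<forall>i<n. P (Suc i)" using h by simp
next
  assume h: "\<forall>i<n. P (Suc i)"
  show "\<forall>i. 1 \<le> i \<and> i \<le> n \<longrightarrow> P i"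
  proof (intro allI impI)
    fix i assume "1 \<le> i \<and> i \<le> n"
    then obtain j where "i = Suc j" "j < n" by (cases i) auto
    then show "P i" using h by simp
  qed
qed

lemma BP0:
  assumes "length a = Suc m" "length b = m" "length c = m" "length d = m"
  shows "(\<forall>i. 1 \<le> i \<and> i \<le> length d \<longrightarrow> ent a i > ent d i \<and> ent d i \<ge> ent a (i + 1)) \<longleftrightarrow>
           (\<forall>i<m. d ! i + 1 \<le> a ! i) \<and> (\<forall>i<m. a ! (i + 0 + 1) + 0 \<le> d ! i)"
    and "(\<forall>i. 1 \<le> i \<and> i \<le> length c \<longrightarrow> entB b (i - 1) > ent c i \<and> ent c i \<ge> ent b i) \<longleftrightarrow>
           (\<forall>i<m - 1. c ! (i + 1) + 1 \<le> b ! i) \<and> (\<forall>i<m. b ! (i + 0) + 0 \<le> c ! i)"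
proof -
  show "(\<forall>i. 1 \<le> i \<and> i \<le> length d \<longrightarrow> ent a i > ent d i \<and> ent d i \<ge> ent a (i + 1)) \<longleftrightarrow>
           (\<forall>i<m. d ! i + 1 \<le> a ! i) \<and> (\<forall>i<m. a ! (i + 0 + 1) + 0 \<le> d ! i)"
    unfolding shift_all using assms by (auto simp: ent_in Suc_le_eq)
  have e: "(\<forall>i<m. entB b i > ent c (Suc i)) \<longleftrightarrow> (\<forall>i<m - 1. c ! (i + 1) + 1 \<le> b ! i)"
  proof
    assume h: "\<forall>i<m. entB b i > ent c (Suc i)"
    show "\<forall>i<m - 1. c ! (i + 1) + 1 \<le> b ! i"
    proof (intro allI impI)
      fix i assume "i < m - 1"
      then have "ent b (Suc i) > ent c (Suc (Suc i))" using h[rule_format, of "Suc i"] by simp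
      then show "c ! (i + 1) + 1 \<le> b ! i" using assms \<open>i < m - 1\<close> by (simp add: ent_in)
    qed
  next
    assume h: "\<forall>i<m - 1. c ! (i + 1) + 1 \<le> b ! i"
    show "\<forall>i<m. entB b i > ent c (Suc i)"
    proof (intro allI impI)
      fix i assume "i < m"
      show "entB b i > ent c (Suc i)"
      proof (cases i)
        case (Suc j)
        then have "j < m - 1" using \<open>i < m\<close> by simp
        then have "c ! (j + 1) + 1 \<le> b ! j" using h by blast
        then show ?thesis using Suc assms \<open>i < m\<close> by (simp add: ent_in)
      qed (simp add: ent_def)
    qed
  qed
  have f: "(\<forall>i<m. ent c (Suc i) \<ge> ent b (Suc i)) \<longleftrightarrow> (\<forall>i<m. b ! (i + 0) + 0 \<le> c ! i)"
    using assms by (simp add: ent_in)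
  show "(\<forall>i. 1 \<le> i \<and> i \<le> length c \<longrightarrow> entB b (i - 1) > ent c i \<and> ent c i \<ge> ent b i) \<longleftrightarrow>
           (\<forall>i<m - 1. c ! (i + 1) + 1 \<le> b ! i) \<and> (\<forall>i<m. b ! (i + 0) + 0 \<le> c ! i)"
    unfolding shift_all e[symmetric] f[symmetric] using assms by auto
qed

lemma BP1:
  assumes "length a = Suc m" "length b = m" "length c = Suc m" "length d = Suc m"
  shows "(\<forall>i. 1 \<le> i \<and> i \<le> length d \<longrightarrow> ent a i \<ge> ent d i \<and> ent d i > ent a (i + 1)) \<longleftrightarrow>
           (\<forall>i<Suc m. d ! (i + 0) + 0 \<le> a ! i) \<and> (\<forall>i<m. a ! (i + 1) + 1 \<le> d ! i)"
    and "(\<forall>i. 1 \<le> i \<and> i \<le> length c \<longrightarrow> entB b (i - 1) \<ge> ent c i \<and> ent c i > ent b i) \<longleftrightarrow>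
           (\<forall>i<m. c ! (i + 1) + 0 \<le> b ! i) \<and> (\<forall>i<m. b ! (i + 0) + 1 \<le> c ! i)"
proof -
  have e1: "(\<forall>i<Suc m. ent d (Suc i) > ent a (Suc (Suc i))) \<longleftrightarrow> (\<forall>i<m. a ! (i + 1) + 1 \<le> d ! i)"
  proof
    assume h: "\<forall>i<Suc m. ent d (Suc i) > ent a (Suc (Suc i))"
    show "\<forall>i<m. a ! (i + 1) + 1 \<le> d ! i"
    proof (intro allI impI)
      fix i assume "i < m"
      then show "a ! (i + 1) + 1 \<le> d ! i" using h[rule_format, of i] assms by (simp add: ent_in)
    qed
  next
    assume h: "\<forall>i<m. a ! (i + 1) + 1 \<le> d ! i"
    show "\<forall>i<Suc m. ent d (Suc i) > ent a (Suc (Suc i))"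
    proof (intro allI impI)
      fix i assume i: "i < Suc m"
      show "ent d (Suc i) > ent a (Suc (Suc i))"
      proof (cases "i < m")
        case True
        then show ?thesis using h[rule_format, of i] assms by (simp add: ent_in)
      next
        case False
        then have "ent a (Suc (Suc i)) = -\<infinity>" using assms i by (simp add: ent_out)
        then show ?thesis using assms i by (simp add: ent_in)
      qed
    qed
  qed
  have f1: "(\<forall>i<Suc m. ent a (Suc i) \<ge> ent d (Suc i)) \<longleftrightarrow> (\<forall>i<Suc m. d ! (i + 0) + 0 \<le> a ! i)"
    using assms by (simp add: ent_in)
  show "(\<forall>i. 1 \<le> i \<and> i \<le> length d \<longrightarrow> ent a i \<ge> ent d i \<and> ent d i > ent a (i + 1)) \<longleftrightarrow>
           (\<forall>i<Suc m. d ! (i + 0) + 0 \<le> a ! i) \<and> (\<forall>i<m. a ! (i + 1) + 1 \<le> d ! i)"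
    unfolding shift_all e1[symmetric] f1[symmetric] using assms by auto
  have e: "(\<forall>i<Suc m. entB b i \<ge> ent c (Suc i)) \<longleftrightarrow> (\<forall>i<m. c ! (i + 1) + 0 \<le> b ! i)"
  proof
    assume h: "\<forall>i<Suc m. entB b i \<ge> ent c (Suc i)"
    show "\<forall>i<m. c ! (i + 1) + 0 \<le> b ! i"
    proof (intro allI impI)
      fix i assume "i < m"
      then have "ent b (Suc i) \<ge> ent c (Suc (Suc i))" using h[rule_format, of "Suc i"] by simp
      then show "c ! (i + 1) + 0 \<le> b ! i" using assms \<open>i < m\<close> by (simp add: ent_in)
    qed
  next
    assume h: "\<forall>i<m. c ! (i + 1) + 0 \<le> b ! i"
    show "\<forall>i<Suc m. entB b i \<ge> ent c (Suc i)"
    proof (intro allI impI)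
      fix i assume "i < Suc m"
      show "entB b i \<ge> ent c (Suc i)"
      proof (cases i)
        case (Suc j)
        then show ?thesis using h[rule_format, of j] assms \<open>i < Suc m\<close> by (simp add: ent_in)
      qed (simp add: ent_def)
    qed
  qed
  have f: "(\<forall>i<Suc m. ent c (Suc i) > ent b (Suc i)) \<longleftrightarrow> (\<forall>i<m. b ! (i + 0) + 1 \<le> c ! i)"
  proof
    assume h: "\<forall>i<Suc m. ent c (Suc i) > ent b (Suc i)"
    show "\<forall>i<m. b ! (i + 0) + 1 \<le> c ! i"
    proof (intro allI impI)
      fix i assume "i < m"
      then show "b ! (i + 0) + 1 \<le> c ! i" using h[rule_format, of i] assms by (simp add: ent_in)
    qed
  next
    assume h: "\<forall>i<m. b ! (i + 0) + 1 \<le> c ! i"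
    show "\<forall>i<Suc m. ent c (Suc i) > ent b (Suc i)"
    proof (intro allI impI)
      fix i assume i: "i < Suc m"
      show "ent c (Suc i) > ent b (Suc i)"
      proof (cases "i < m")
        case True
        then show ?thesis using h[rule_format, of i] assms by (simp add: ent_in)
      next
        case False
        then have "ent b (Suc i) = -\<infinity>" using assms i by (simp add: ent_out)
        then show ?thesis using assms i by (simp add: ent_in)
      qed
    qed
  qed
  show "(\<forall>i. 1 \<le> i \<and> i \<le> length c \<longrightarrow> entB b (i - 1) \<ge> ent c i \<and> ent c i > ent b i) \<longleftrightarrow>
           (\<forall>i<m. c ! (i + 1) + 0 \<le> b ! i) \<and> (\<forall>i<m. b ! (i + 0) + 1 \<le> c ! i)"
    unfolding shift_all e[symmetric] f[symmetric] using assms by auto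
qed

lemma move_props:
  assumes M: "M \<subseteq> entries_I (p, q)" and sp: "sorted_wrt (>) p" and sq: "sorted_wrt (>) q"
  shows "sorted_wrt (>) (fst (move (p, q) M))" "sorted_wrt (>) (snd (move (p, q) M))"
    "N (fst (move (p, q) M)) x + N (snd (move (p, q) M)) x = N p x + N q x"
proof -
  define S1 where "S1 = (set p - M) \<union> (set q \<inter> M)"
  define S2 where "S2 = (set q - M) \<union> (set p \<inter> M)"
  have fin: "finite S1" "finite S2" by (auto simp: S1_def S2_def)
  have mv: "move (p, q) M = (dec_list S1, dec_list S2)" by (simp add: move_def S1_def S2_def)
  show "sorted_wrt (>) (fst (move (p, q) M))" "sorted_wrt (>) (snd (move (p, q) M))"
    using mv fin dec_list_props by auto
  let ?F = "\<lambda>S. {y \<in> S. x \<le> y}"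
  have un: "?F S1 \<union> ?F S2 = ?F (set p) \<union> ?F (set q)" using M
    by (auto simp: S1_def S2_def entries_I_def)
  have it: "?F S1 \<inter> ?F S2 = ?F (set p) \<inter> ?F (set q)" using M
    by (auto simp: S1_def S2_def entries_I_def)
  have "card (?F S1) + card (?F S2) = card (?F (set p)) + card (?F (set q))"
    using card_Un_Int[of "?F S1" "?F S2"] card_Un_Int[of "?F (set p)" "?F (set q)"] fin un it by simp
  then show "N (fst (move (p, q) M)) x + N (snd (move (p, q) M)) x = N p x + N q x"
    using mv fin dec_list_props by (simp add: N_def)
qed

lemma N0: "sorted_wrt (>) xs \<Longrightarrow> N xs 0 = length xs"
  using sdist by (simp add: N_def distinct_card)

lemma special1_nat:
  assumes "special_def1 (a, b)" "length b = m"
  shows "sorted_wrt (>) a" "sorted_wrt (>) b" "length a = Suc m"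
    "\<forall>i<m. b ! (i + 0) + 0 \<le> a ! i" "\<forall>i<m. a ! (i + 1) + 0 \<le> b ! i"
proof -
  have h: "\<forall>i<m. ent a (Suc i) \<ge> ent b (Suc i) \<and> ent b (Suc i) \<ge> ent a (Suc i + 1)"
    using assms unfolding special_def1_def shift_all by simp
  show "sorted_wrt (>) a" "sorted_wrt (>) b" "length a = Suc m"
    using assms by (auto simp: special_def1_def is_symbol_def)
  then show "\<forall>i<m. b ! (i + 0) + 0 \<le> a ! i" "\<forall>i<m. a ! (i + 1) + 0 \<le> b ! i"
    using h assms by (auto simp: ent_in)
qed

lemma special0_nat:
  assumes "special_def0 (c, d)" "length c = m"
  shows "sorted_wrt (>) c" "sorted_wrt (>) d" "length d = m"
    "\<forall>i<m. d ! (i + 0) + 0 \<le> c ! i" "\<forall>i<m - 1. c ! (i + 1) + 0 \<le> d ! i"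
proof -
  have h: "\<forall>i<m. ent c (Suc i) \<ge> ent d (Suc i) \<and> (Suc i < m \<longrightarrow> ent d (Suc i) \<ge> ent c (Suc i + 1))"
    using assms unfolding special_def0_def shift_all by simp
  show "sorted_wrt (>) c" "sorted_wrt (>) d" "length d = m"
    using assms by (auto simp: special_def0_def is_symbol_def)
  then show "\<forall>i<m. d ! (i + 0) + 0 \<le> c ! i" "\<forall>i<m - 1. c ! (i + 1) + 0 \<le> d ! i"
    using h assms by (auto simp: ent_in)
qed

definition NF0 :: "nat list \<Rightarrow> nat list \<Rightarrow> nat list \<Rightarrow> nat list \<Rightarrow> nat \<Rightarrow> bool" where
  "NF0 a b c d m \<longleftrightarrow> (\<forall>i<m. d ! (i + 0) + 1 \<le> a ! i) \<and> (\<forall>i<m. a ! (i + 1) + 0 \<le> d ! i) \<and>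
     (\<forall>i<m - 1. c ! (i + 1) + 1 \<le> b ! i) \<and> (\<forall>i<m. b ! (i + 0) + 0 \<le> c ! i)"
definition CF0 :: "nat list \<Rightarrow> nat list \<Rightarrow> nat list \<Rightarrow> nat list \<Rightarrow> bool" where
  "CF0 a b c d \<longleftrightarrow> (\<forall>x. N d x \<le> N a (x + 1) + 0) \<and> (\<forall>x. N a x \<le> N d (x + 0) + 1) \<and>
     (\<forall>x. N c x \<le> N b (x + 1) + 1) \<and> (\<forall>x. N b x \<le> N c (x + 0) + 0)"
definition NF1 :: "nat list \<Rightarrow> nat list \<Rightarrow> nat list \<Rightarrow> nat list \<Rightarrow> nat \<Rightarrow> bool" where
  "NF1 a b c d m \<longleftrightarrow> (\<forall>i<Suc m. d ! (i + 0) + 0 \<le> a ! i) \<and> (\<forall>i<m. a ! (i + 1) + 1 \<le> d ! i) \<and>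
     (\<forall>i<m. c ! (i + 1) + 0 \<le> b ! i) \<and> (\<forall>i<m. b ! (i + 0) + 1 \<le> c ! i)"
definition CF1 :: "nat list \<Rightarrow> nat list \<Rightarrow> nat list \<Rightarrow> nat list \<Rightarrow> bool" where
  "CF1 a b c d \<longleftrightarrow> (\<forall>x. N d x \<le> N a (x + 0) + 0) \<and> (\<forall>x. N a x \<le> N d (x + 1) + 1) \<and>
     (\<forall>x. N c x \<le> N b (x + 0) + 1) \<and> (\<forall>x. N b x \<le> N c (x + 1) + 0)"

lemma NF0_CF0:
  assumes "sorted_wrt (>) a" "sorted_wrt (>) b" "sorted_wrt (>) c" "sorted_wrt (>) d"
    "length a = Suc m" "length b = m" "length c = m" "length d = m" "m \<ge> 1"
  shows "NF0 a b c d m \<longleftrightarrow> CF0 a b c d"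
  unfolding NF0_def CF0_def
  using G[of d a m 0 1] G[of a d m 1 0] G[of c b "m - 1" 1 1] G[of b c m 0 0] assms by auto

lemma NF1_CF1:
  assumes "sorted_wrt (>) a" "sorted_wrt (>) b" "sorted_wrt (>) c" "sorted_wrt (>) d"
    "length a = Suc m" "length b = m" "length c = Suc m" "length d = Suc m"
  shows "NF1 a b c d m \<longleftrightarrow> CF1 a b c d"
  unfolding NF1_def CF1_def
  using G[of d a "Suc m" 0 0] G[of a d m 1 1] G[of c b m 1 0] G[of b c m 0 1] assms by auto

lemma CF0_transfer:
  assumes cf: "CF0 a' b' c' d'"
    and hab: "\<And>x. N a' x + N b' x = N a x + N b x"
    and hcd: "\<And>x. N c' x + N d' x = N c x + N d x"
    and sA1: "\<And>x. N b x \<le> N a x" and sA2: "\<And>x. N a x \<le> N b x + 1"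
    and sC1: "\<And>x. N d x \<le> N c x" and sC2: "\<And>x. N c x \<le> N d x + 1"
  shows "CF0 a b c d"
proof -
  have c1: "\<And>x. N d' x \<le> N a' (x + 1)" and c2: "\<And>x. N a' x \<le> N d' x + 1"
    and c3: "\<And>x. N c' x \<le> N b' (x + 1) + 1" and c4: "\<And>x. N b' x \<le> N c' x"
    using cf unfolding CF0_def by auto
  have "\<forall>x. N d x \<le> N a (x + 1) + 0"
  proof
    fix x
    show "N d x \<le> N a (x + 1) + 0"
      using c1[of x] c3[of x] hab[of "x + 1"] hcd[of x] sA1[of "x + 1"] sA2[of "x + 1"] sC1[of x] sC2[of x]
      by simp
  qed
  moreover have "\<forall>x. N a x \<le> N d (x + 0) + 1"
  proof
    fix x
    show "N a x \<le> N d (x + 0) + 1"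
      using c2[of x] c4[of x] hab[of x] hcd[of x] sA1[of x] sA2[of x] sC1[of x] sC2[of x]
      by simp
  qed
  moreover have "\<forall>x. N c x \<le> N b (x + 1) + 1"
  proof
    fix x
    show "N c x \<le> N b (x + 1) + 1"
      using c1[of x] c3[of x] hab[of "x + 1"] hcd[of x] sA1[of "x + 1"] sA2[of "x + 1"] sC1[of x] sC2[of x]
      by simp
  qed
  moreover have "\<forall>x. N b x \<le> N c (x + 0) + 0"
  proof
    fix x
    show "N b x \<le> N c (x + 0) + 0"
      using c2[of x] c4[of x] hab[of x] hcd[of x] sA1[of x] sA2[of x] sC1[of x] sC2[of x]
      by simp
  qed
  ultimately show ?thesis unfolding CF0_def by blast
qed

lemma CF1_transfer:
  assumes cf: "CF1 a' b' c' d'"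
    and hab: "\<And>x. N a' x + N b' x = N a x + N b x"
    and hcd: "\<And>x. N c' x + N d' x = N c x + N d x"
    and sA1: "\<And>x. N b x \<le> N a x" and sA2: "\<And>x. N a x \<le> N b x + 1"
    and sC1: "\<And>x. N d x \<le> N c x" and sC2: "\<And>x. N c x \<le> N d x + 1"
  shows "CF1 a b c d"
proof -
  have c1: "\<And>x. N d' x \<le> N a' x" and c2: "\<And>x. N a' x \<le> N d' (x + 1) + 1"
    and c3: "\<And>x. N c' x \<le> N b' x + 1" and c4: "\<And>x. N b' x \<le> N c' (x + 1)"
    using cf unfolding CF1_def by auto
  have "\<forall>x. N d x \<le> N a (x + 0) + 0"
  proof
    fix x
    show "N d x \<le> N a (x + 0) + 0"
      using c1[of x] c3[of x] hab[of x] hcd[of x] sA1[of x] sA2[of x] sC1[of x] sC2[of x]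
      by simp
  qed
  moreover have "\<forall>x. N a x \<le> N d (x + 1) + 1"
  proof
    fix x
    show "N a x \<le> N d (x + 1) + 1"
      using c2[of x] c4[of x] hab[of x] hcd[of "x + 1"] sA1[of x] sA2[of x] sC1[of "x + 1"] sC2[of "x + 1"]
      by simp
  qed
  moreover have "\<forall>x. N c x \<le> N b (x + 0) + 1"
  proof
    fix x
    show "N c x \<le> N b (x + 0) + 1"
      using c1[of x] c3[of x] hab[of x] hcd[of x] sA1[of x] sA2[of x] sC1[of x] sC2[of x]
      by simp
  qed
  moreover have "\<forall>x. N b x \<le> N c (x + 1) + 0"
  proof
    fix x
    show "N b x \<le> N c (x + 1) + 0"
      using c2[of x] c4[of x] hab[of x] hcd[of "x + 1"] sA1[of x] sA2[of x] sC1[of "x + 1"] sC2[of "x + 1"]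
      by simp
  qed
  ultimately show ?thesis unfolding CF1_def by blast
qed

lemma Dmem:
  assumes Z: "special_def1 (a, b)" and mZ: "length b = m"
    and Z': "special_def0 (c, d)" and mZ': "length c = m'"
    and m1: "m' \<ge> 1"
    and LL: "((a', b'), (c', d')) \<in> Dset (a, b) (c, d)"
  shows "(m' = m \<longrightarrow> NF0 a b c d m) \<and> (m' = m + 1 \<longrightarrow> NF1 a b c d m)"
proof -
  note s1 = special1_nat[OF Z mZ] and s0 = special0_nat[OF Z' mZ']
  have "\<exists>M. M \<subseteq> entries_I (a, b) \<and> (a', b') = move (a, b) M \<and> defect (a', b') = 1"
    using LL by (auto simp: Dset_def S_def_def Sbar_def)
  then obtain M where M: "M \<subseteq> entries_I (a, b)" "(a', b') = move (a, b) M" "defect (a', b') = 1"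
    by blast
  have "\<exists>M'. M' \<subseteq> entries_I (c, d) \<and> (c', d') = move (c, d) M' \<and> defect (c', d') = 0"
    using LL by (auto simp: Dset_def S_def_def Sbar_def)
  then obtain M' where M': "M' \<subseteq> entries_I (c, d)" "(c', d') = move (c, d) M'" "defect (c', d') = 0"
    by blast
  have mpL1: "sorted_wrt (>) a'" "sorted_wrt (>) b'"
    using move_props(1,2)[OF M(1) s1(1) s1(2)] M(2) by (metis fst_conv snd_conv)+
  have mpL3: "\<And>x. N a' x + N b' x = N a x + N b x"
    using move_props(3)[OF M(1) s1(1) s1(2)] M(2) by (metis fst_conv snd_conv)
  have mpL'1: "sorted_wrt (>) c'" "sorted_wrt (>) d'"
    using move_props(1,2)[OF M'(1) s0(1) s0(2)] M'(2) by (metis fst_conv snd_conv)+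
  have mpL'3: "\<And>x. N c' x + N d' x = N c x + N d x"
    using move_props(3)[OF M'(1) s0(1) s0(2)] M'(2) by (metis fst_conv snd_conv)
  have la: "length a' = Suc m" "length b' = m"
    using mpL3[of 0] N0[OF mpL1(1)] N0[OF mpL1(2)] N0[OF s1(1)] N0[OF s1(2)] M(3) s1(3) mZ
    by (auto simp: defect_def)
  have lc: "length c' = m'" "length d' = m'"
    using mpL'3[of 0] N0[OF mpL'1(1)] N0[OF mpL'1(2)] N0[OF s0(1)] N0[OF s0(2)] M'(3) s0(3) mZ'
    by (auto simp: defect_def)
  have body: "(m' = m \<longrightarrow>
         (\<forall>i. 1 \<le> i \<and> i \<le> length d' \<longrightarrow> ent a' i > ent d' i \<and> ent d' i \<ge> ent a' (i + 1)) \<and>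
         (\<forall>i. 1 \<le> i \<and> i \<le> length c' \<longrightarrow> entB b' (i - 1) > ent c' i \<and> ent c' i \<ge> ent b' i)) \<and>
      (m' = m + 1 \<longrightarrow>
         (\<forall>i. 1 \<le> i \<and> i \<le> length d' \<longrightarrow> ent a' i \<ge> ent d' i \<and> ent d' i > ent a' (i + 1)) \<and>
         (\<forall>i. 1 \<le> i \<and> i \<le> length c' \<longrightarrow> entB b' (i - 1) \<ge> ent c' i \<and> ent c' i > ent b' i))"
    using LL mZ mZ' by (simp add: Dset_def Bplus_def Let_def)
  have sA1: "\<And>x. N b x \<le> N a x" and sA2: "\<And>x. N a x \<le> N b x + 1"
    using G[of b a m 0 0] G[of a b m 1 0] s1 mZ by auto
  have sC1: "\<And>x. N d x \<le> N c x" and sC2: "\<And>x. N c x \<le> N d x + 1"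
    using G[of d c m' 0 0] G[of c d "m' - 1" 1 0] s0 mZ' m1 by auto
  have r0: "m' = m \<longrightarrow> NF0 a b c d m"
  proof
    assume e: "m' = m"
    have "NF0 a' b' c' d' m"
      using body e BP0[OF la lc[unfolded e]] lc by (simp add: NF0_def)
    then have cf: "CF0 a' b' c' d'" using NF0_CF0 mpL1 mpL'1 la lc e m1 by simp
    have "CF0 a b c d" using CF0_transfer[OF cf mpL3 mpL'3 sA1 sA2 sC1 sC2] .
    then show "NF0 a b c d m" using NF0_CF0 s1 s0 mZ mZ' e m1 by simp
  qed
  have r1: "m' = m + 1 \<longrightarrow> NF1 a b c d m"
  proof
    assume e: "m' = m + 1"
    have "NF1 a' b' c' d' m"
      using body e BP1[OF la, of c' d'] lc by (simp add: NF1_def)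
    then have cf: "CF1 a' b' c' d'" using NF1_CF1 mpL1 mpL'1 la lc e by simp
    have "CF1 a b c d" using CF1_transfer[OF cf mpL3 mpL'3 sA1 sA2 sC1 sC2] .
    then show "NF1 a b c d m" using NF1_CF1 s1 s0 mZ mZ' e by simp
  qed
  show ?thesis using r0 r1 by blast
qed

lemma Dne:
  assumes Z: "special_def1 (a, b)" and mZ: "length b = m"
    and Z': "special_def0 (c, d)" and mZ': "length c = m'"
    and m1: "m' \<ge> 1"
    and nonempty: "Dset (a, b) (c, d) \<noteq> {}"
  shows "(m' = m \<longrightarrow> NF0 a b c d m) \<and> (m' = m + 1 \<longrightarrow> NF1 a b c d m)"
proof -
  have "\<exists>a' b' c' d'. ((a', b'), (c', d')) \<in> Dset (a, b) (c, d)" using nonempty by auto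
  then obtain a' b' c' d' where LL: "((a', b'), (c', d')) \<in> Dset (a, b) (c, d)" by blast
  show ?thesis using Dmem[OF Z mZ Z' mZ' m1 LL] .
qed

lemma caseA:
  assumes nf: "NF0 a b c d m" and l: "length a = Suc m" "length b = m" "length c = m" "length d = m"
    and p: "p < m" and dc: "d ! p < c ! p"
    and sp0: "\<forall>i<m. d ! (i + 0) + 0 \<le> c ! i"
  shows "NF0 a b (c[p := d ! p]) (d[p := c ! p]) m \<longleftrightarrow> (c ! p < a ! p \<and> b ! p \<le> d ! p)"
  using nf l p dc sp0 unfolding NF0_def
  by (auto simp: nth_list_update)

lemma all_Suc_eq: "(\<forall>i. p = Suc i \<longrightarrow> Q i) = (p = 0 \<or> Q (p - 1))"
  by (cases p) auto

lemma caseB: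
  assumes nf: "NF0 a b c d m" and l: "length a = Suc m" "length b = m" "length c = m" "length d = m"
    and p: "p < m" "1 \<le> p" and dc: "c ! p < d ! (p - 1)"
    and sp0: "\<forall>i<m. d ! (i + 0) + 0 \<le> c ! i"
  shows "NF0 a b (c[p := d ! (p - 1)]) (d[p - 1 := c ! p]) m \<longleftrightarrow> (a ! p \<le> c ! p \<and> d ! (p - 1) < b ! (p - 1))"
  using nf l p dc sp0 unfolding NF0_def
  by (auto simp: nth_list_update all_Suc_eq)

lemma caseC:
  assumes nf: "NF1 a b c d m" and l: "length a = Suc m" "length b = m" "length c = Suc m" "length d = Suc m"
    and p: "p < Suc m" and dc: "d ! p < c ! p"
    and sp0: "\<forall>i<Suc m. d ! (i + 0) + 0 \<le> c ! i"
  shows "NF1 a b (c[p := d ! p]) (d[p := c ! p]) m \<longleftrightarrow> (c ! p \<le> a ! p \<and> (p < m \<longrightarrow> b ! p < d ! p))"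
  using nf l p dc sp0 unfolding NF1_def
  by (auto simp: nth_list_update)

lemma caseD:
  assumes nf: "NF1 a b c d m" and l: "length a = Suc m" "length b = m" "length c = Suc m" "length d = Suc m"
    and p: "p < Suc m" "1 \<le> p" and dc: "c ! p < d ! (p - 1)"
    and sp0: "\<forall>i<Suc m. d ! (i + 0) + 0 \<le> c ! i"
  shows "NF1 a b (c[p := d ! (p - 1)]) (d[p - 1 := c ! p]) m \<longleftrightarrow> (a ! p < c ! p \<and> d ! (p - 1) \<le> b ! (p - 1))"
  using nf l p dc sp0 unfolding NF1_def
  by (auto simp: nth_list_update all_Suc_eq)

lemma sorted_update:
  assumes s: "sorted_wrt (>) (xs :: nat list)" and p: "p < length xs"
    and lft: "0 < p \<Longrightarrow> w < xs ! (p - 1)" and rgt: "Suc p < length xs \<Longrightarrow> xs ! (Suc p) < w"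
  shows "sorted_wrt (>) (xs[p := w])"
  unfolding sorted_wrt_iff_nth_less
proof (intro allI impI)
  fix i j assume ij: "i < j" "j < length (xs[p := w])"
  have mono: "\<And>i j. i \<le> j \<Longrightarrow> j < length xs \<Longrightarrow> xs ! j \<le> xs ! i"
  proof -
    fix i j :: nat assume "i \<le> j" "j < length xs"
    then show "xs ! j \<le> xs ! i"
      using sorted_wrt_nth_less[OF s, of i j] by (cases "i = j") auto
  qed
  show "xs[p := w] ! j < xs[p := w] ! i"
  proof (cases "i = p")
    case True
    then have "xs ! j \<le> xs ! Suc p" using ij mono by simp
    then show ?thesis using True ij rgt p by (simp add: nth_list_update)
  next
    case False
    note F = False
    show ?thesis
    proof (cases "j = p")
      case True
      then have "xs ! (p - 1) \<le> xs ! i" using ij mono by simp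
      then show ?thesis using True F ij lft p by (simp add: nth_list_update)
    next
      case False
      then show ?thesis using F ij s by (simp add: nth_list_update sorted_wrt_iff_nth_less)
    qed
  qed
qed

theorem lemma0301:
  fixes a b c d :: "nat list" and m m' k l :: nat
  assumes Z: "special_def1 (a, b)" and mZ: "length b = m"
    and Z': "special_def0 (c, d)" and mZ': "length c = m'"
    and mm: "m' = m \<or> m' = m + 1"
    and k: "1 \<le> k" "k \<le> m'" and l: "1 \<le> l" "l \<le> m'" and kl: "l = k - 1 \<or> l = k"
    and pair: "{c ! (k - 1), d ! (l - 1)} \<subseteq> entries_I (c, d)"
    and nonempty: "Dset (a, b) (c, d) \<noteq> {}"
  shows "((a, b), move (c, d) {c ! (k - 1), d ! (l - 1)}) \<in> Dset (a, b) (c, d) \<longleftrightarrow>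
    (if m' = m \<and> l = k then ent a k > ent c k \<and> ent d k \<ge> ent b k
     else if m' = m \<and> l = k - 1 then ent c k \<ge> ent a k \<and> ent b (k - 1) > ent d (k - 1)
     else if m' = m + 1 \<and> l = k then ent a k \<ge> ent c k \<and> ent d k > ent b k
     else ent c k > ent a k \<and> ent b (k - 1) \<ge> ent d (k - 1))"
proof -
  note s1 = special1_nat[OF Z mZ] and s0 = special0_nat[OF Z' mZ']
  have m1: "m' \<ge> 1" using k by simp
  have NF: "(m' = m \<longrightarrow> NF0 a b c d m) \<and> (m' = m + 1 \<longrightarrow> NF1 a b c d m)"
    using Dne[OF Z mZ Z' mZ' m1 nonempty] .
  define p where "p = k - 1"
  define q where "q = l - 1"
  have kp: "k = Suc p" using k p_def by simp
  have lq: "l = Suc q" using l q_def by simp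
  have pm: "p < m'" "q < m'" using k l kp lq by auto
  define w1 where "w1 = c ! p"
  define w2 where "w2 = d ! q"
  have pe: "w1 \<in> entries_I (c, d)" "w2 \<in> entries_I (c, d)"
    using pair unfolding w1_def w2_def p_def q_def by auto
  have w1c: "w1 \<in> set c" using pm mZ' w1_def by simp
  have w2d: "w2 \<in> set d" using pm s0(3) w2_def by simp
  have w1: "w1 \<in> set c" "w1 \<notin> set d" using w1c pe(1) by (auto simp: entries_I_def)
  have w2: "w2 \<in> set d" "w2 \<notin> set c" using w2d pe(2) by (auto simp: entries_I_def)
  define c' where "c' = c[p := w2]"
  define d' where "d' = d[q := w1]"
  have dc_le: "\<And>i. i < m' \<Longrightarrow> d ! i \<le> c ! i" using s0(4) by simp
  have cd_le: "\<And>i. i + 1 < m' \<Longrightarrow> c ! (i + 1) \<le> d ! i" using s0(5) by simp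
  have cin: "\<And>i. i < m' \<Longrightarrow> c ! i \<in> set c" using mZ' by simp
  have din: "\<And>i. i < m' \<Longrightarrow> d ! i \<in> set d" using s0(3) by simp
  have cmono: "\<And>i j. i < j \<Longrightarrow> j < m' \<Longrightarrow> c ! j < c ! i"
    using s0(1) mZ' unfolding sorted_wrt_iff_nth_less by blast
  have dmono: "\<And>i j. i < j \<Longrightarrow> j < m' \<Longrightarrow> d ! j < d ! i"
    using s0(2) s0(3) unfolding sorted_wrt_iff_nth_less by blast
  have cne: "\<And>i. i < m' \<Longrightarrow> c ! i \<noteq> w2" using cin w2(2) by blast
  have dne: "\<And>i. i < m' \<Longrightarrow> d ! i \<noteq> w1" using din w1(2) by blast
  have Q: "q = p \<or> (q = p - 1 \<and> 1 \<le> p)" using kl kp lq by auto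
  have strict: "q = p \<Longrightarrow> d ! p < c ! p" "q = p - 1 \<Longrightarrow> 1 \<le> p \<Longrightarrow> c ! p < d ! (p - 1)"
  proof -
    assume h: "q = p"
    have "d ! p \<le> c ! p" using dc_le pm(1) .
    moreover have "c ! p \<noteq> d ! p" using cne[OF pm(1)] h w2_def by simp
    ultimately show "d ! p < c ! p" by simp
  next
    assume h: "q = p - 1" "1 \<le> p"
    have e: "p - 1 + 1 = p" using h by simp
    have "c ! (p - 1 + 1) \<le> d ! (p - 1)" using cd_le[of "p - 1"] pm e by simp
    then have "c ! p \<le> d ! (p - 1)" using e by simp
    moreover have "d ! (p - 1) \<noteq> c ! p" using dne[of "p - 1"] pm h w1_def by simp
    ultimately show "c ! p < d ! (p - 1)" by simp
  qed
  have sc': "sorted_wrt (>) c'"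
    unfolding c'_def
  proof (rule sorted_update[OF s0(1)])
    show "p < length c" using pm mZ' by simp
    show "0 < p \<Longrightarrow> w2 < c ! (p - 1)"
    proof -
      assume p0: "0 < p"
      have cm: "c ! p < c ! (p - 1)" using cmono[of "p - 1" p] p0 pm by simp
      show "w2 < c ! (p - 1)"
      proof (cases "q = p")
        case True
        then have "w2 = d ! p" using w2_def by simp
        then show ?thesis using strict(1)[OF True] cm by simp
      next
        case False
        then have qq: "q = p - 1" using Q by simp
        then have "w2 = d ! (p - 1)" using w2_def by simp
        moreover have "d ! (p - 1) \<le> c ! (p - 1)" using dc_le[of "p - 1"] pm by simp
        moreover have "c ! (p - 1) \<noteq> w2" using cne[of "p - 1"] pm by simp
        ultimately show ?thesis by simp
      qed
    qed
    show "Suc p < length c \<Longrightarrow> c ! Suc p < w2"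
    proof -
      assume h: "Suc p < length c"
      show "c ! Suc p < w2"
      proof (cases "q = p")
        case True
        then have "w2 = d ! p" using w2_def by simp
        moreover have "c ! (p + 1) \<le> d ! p" using cd_le[of p] h mZ' by simp
        moreover have "c ! Suc p \<noteq> w2" using cne[of "Suc p"] h mZ' by simp
        ultimately show ?thesis by simp
      next
        case False
        then have qq: "q = p - 1" "1 \<le> p" using Q by auto
        then have "w2 = d ! (p - 1)" using w2_def by simp
        moreover have "c ! Suc p < c ! p" using cmono[of p "Suc p"] h mZ' by simp
        ultimately show ?thesis using strict(2)[OF qq] by simp
      qed
    qed
  qed
  have sd': "sorted_wrt (>) d'"
    unfolding d'_def
  proof (rule sorted_update[OF s0(2)])
    show "q < length d" using pm s0(3) by simp
    show "0 < q \<Longrightarrow> w1 < d ! (q - 1)"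
    proof -
      assume q0: "0 < q"
      show "w1 < d ! (q - 1)"
      proof (cases "q = p")
        case True
        have e: "q - 1 + 1 = p" using q0 True by simp
        have "c ! (q - 1 + 1) \<le> d ! (q - 1)" using cd_le[of "q - 1"] pm e by simp
        then have "w1 \<le> d ! (q - 1)" using e w1_def by simp
        moreover have "d ! (q - 1) \<noteq> w1" using dne[of "q - 1"] pm by simp
        ultimately show ?thesis by simp
      next
        case False
        then have qq: "q = p - 1" "1 \<le> p" using Q by auto
        have "d ! q < d ! (q - 1)" using dmono[of "q - 1" q] q0 pm by simp
        then show ?thesis using strict(2)[OF qq] qq w1_def by simp
      qed
    qed
    show "Suc q < length d \<Longrightarrow> d ! Suc q < w1"
    proof -
      assume h: "Suc q < length d"
      show "d ! Suc q < w1"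
      proof (cases "q = p")
        case True
        have "d ! Suc p < d ! p" using dmono[of p "Suc p"] h s0(3) True by simp
        then show ?thesis using strict(1)[OF True] True w1_def by simp
      next
        case False
        then have qq: "q = p - 1" "1 \<le> p" using Q by auto
        then have sq: "Suc q = p" by simp
        have "d ! p \<le> c ! p" using dc_le pm(1) .
        moreover have "d ! p \<noteq> w1" using dne pm(1) .
        ultimately show ?thesis using sq w1_def by simp
      qed
    qed
  qed
  have lc': "length c' = m'" "length d' = m'" using mZ' s0(3) by (auto simp: c'_def d'_def)
  have mv: "move (c, d) {c ! (k - 1), d ! (l - 1)} = (c', d')"
  proof -
    have dst: "distinct c" "distinct d" using sdist s0(1,2) by auto
    have "set c' = (set c - {w1, w2}) \<union> (set d \<inter> {w1, w2})"
      using set_update_distinct[OF dst(1), of p w2] pm mZ' w1 w2 unfolding c'_def w1_def by auto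
    moreover have "set d' = (set d - {w1, w2}) \<union> (set c \<inter> {w1, w2})"
      using set_update_distinct[OF dst(2), of q w1] pm s0(3) w1 w2 unfolding d'_def w2_def by auto
    ultimately show ?thesis
      using dec_list_set[OF sc'] dec_list_set[OF sd'] unfolding move_def w1_def w2_def p_def q_def
      by simp
  qed
  have abS: "(a, b) \<in> S_def (a, b) 1"
  proof -
    have "move (a, b) {} = (a, b)" using dec_list_set s1(1,2) by (simp add: move_def)
    then have "(a, b) \<in> Sbar (a, b)" unfolding Sbar_def by force
    then show ?thesis using s1(3) mZ by (simp add: S_def_def defect_def)
  qed
  have cdS: "(c', d') \<in> S_def (c, d) 0"
  proof -
    have "(c', d') \<in> Sbar (c, d)" unfolding Sbar_def using mv[symmetric] pair by blast
    then show ?thesis using lc' by (simp add: S_def_def defect_def)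
  qed
  have mem: "((a, b), (c', d')) \<in> Dset (a, b) (c, d) \<longleftrightarrow>
      (m' = m \<longrightarrow>
         (\<forall>i. 1 \<le> i \<and> i \<le> length d' \<longrightarrow> ent a i > ent d' i \<and> ent d' i \<ge> ent a (i + 1)) \<and>
         (\<forall>i. 1 \<le> i \<and> i \<le> length c' \<longrightarrow> entB b (i - 1) > ent c' i \<and> ent c' i \<ge> ent b i)) \<and>
      (m' = m + 1 \<longrightarrow>
         (\<forall>i. 1 \<le> i \<and> i \<le> length d' \<longrightarrow> ent a i \<ge> ent d' i \<and> ent d' i > ent a (i + 1)) \<and>
         (\<forall>i. 1 \<le> i \<and> i \<le> length c' \<longrightarrow> entB b (i - 1) \<ge> ent c' i \<and> ent c' i > ent b i))"
    using abS cdS mZ mZ' s1(3) lc' by (auto simp: Dset_def Bplus_def Let_def S_def_def defect_def)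
  have sp0': "\<forall>i<m'. d ! (i + 0) + 0 \<le> c ! i" using s0(4) .
  consider (A) "m' = m" "q = p" | (B) "m' = m" "q = p - 1" "1 \<le> p" | (C) "m' = m + 1" "q = p"
    | (D) "m' = m + 1" "q = p - 1" "1 \<le> p"
    using mm Q by auto
  then show ?thesis
  proof cases
    case A
    have "NF0 a b c' d' m \<longleftrightarrow> (c ! p < a ! p \<and> b ! p \<le> d ! p)"
      unfolding c'_def d'_def w1_def w2_def A(2)
      using caseA[of a b c d m p] NF A s1(3) mZ mZ' s0(3) pm strict(1) sp0' by simp
    moreover have "NF0 a b c' d' m \<longleftrightarrow> ((a, b), (c', d')) \<in> Dset (a, b) (c, d)"
      unfolding mem using BP0[of a m b c' d'] A s1(3) mZ lc' by (simp add: NF0_def)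
    ultimately show ?thesis using A mv kp lq pm s1(3) mZ mZ' s0(3) by (simp add: ent_in)
  next
    case B
    have "NF0 a b c' d' m \<longleftrightarrow> (a ! p \<le> c ! p \<and> d ! (p - 1) < b ! (p - 1))"
      unfolding c'_def d'_def w1_def w2_def B(2)
      using caseB[of a b c d m p] NF B s1(3) mZ mZ' s0(3) pm strict(2) sp0' by simp
    moreover have "NF0 a b c' d' m \<longleftrightarrow> ((a, b), (c', d')) \<in> Dset (a, b) (c, d)"
      unfolding mem using BP0[of a m b c' d'] B s1(3) mZ lc' by (simp add: NF0_def)
    moreover have "ent b (k - 1) = ereal (real (b ! (p - 1)))" "ent d (k - 1) = ereal (real (d ! (p - 1)))"
      using ent_in[of "p - 1" b] ent_in[of "p - 1" d] B kp pm mZ s0(3) by auto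
    ultimately show ?thesis using B mv kp lq pm s1(3) mZ mZ' s0(3) by (simp add: ent_in)
  next
    case C
    have "NF1 a b c' d' m \<longleftrightarrow> (c ! p \<le> a ! p \<and> (p < m \<longrightarrow> b ! p < d ! p))"
      unfolding c'_def d'_def w1_def w2_def C(2)
      using caseC[of a b c d m p] NF C s1(3) mZ mZ' s0(3) pm strict(1) sp0' by simp
    moreover have "NF1 a b c' d' m \<longleftrightarrow> ((a, b), (c', d')) \<in> Dset (a, b) (c, d)"
      unfolding mem using BP1[of a m b c' d'] C s1(3) mZ lc' by (simp add: NF1_def)
    moreover have "ent d k > ent b k \<longleftrightarrow> (p < m \<longrightarrow> b ! p < d ! p)"
    proof (cases "p < m")
      case True
      then show ?thesis using kp mZ s0(3) C by (simp add: ent_in)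
    next
      case False
      then have "ent b k = -\<infinity>" using kp mZ by (simp add: ent_out)
      then show ?thesis using False kp pm s0(3) by (simp add: ent_in)
    qed
    ultimately show ?thesis using C mv kp lq pm s1(3) mZ mZ' s0(3) by (simp add: ent_in)
  next
    case D
    have "NF1 a b c' d' m \<longleftrightarrow> (a ! p < c ! p \<and> d ! (p - 1) \<le> b ! (p - 1))"
      unfolding c'_def d'_def w1_def w2_def D(2)
      using caseD[of a b c d m p] NF D s1(3) mZ mZ' s0(3) pm strict(2) sp0' by simp
    moreover have "NF1 a b c' d' m \<longleftrightarrow> ((a, b), (c', d')) \<in> Dset (a, b) (c, d)"
      unfolding mem using BP1[of a m b c' d'] D s1(3) mZ lc' by (simp add: NF1_def)
    moreover have "ent b (k - 1) = ereal (real (b ! (p - 1)))" "ent d (k - 1) = ereal (real (d ! (p - 1)))"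
      using ent_in[of "p - 1" b] ent_in[of "p - 1" d] D kp pm mZ s0(3) by auto
    ultimately show ?thesis using D mv kp lq pm s1(3) mZ mZ' s0(3) by (simp add: ent_in)
  qed
qed

thm_deps lemma0301

end
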